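(* A topological space $X$ is $H^*$-$T_{1/2}$ if and only if for each $x\in X$ the singleton $\{x\}$ is $H^*$-open or $H^*$-closed in $X$.
   Context: Let $(X,\tau)$ be a topological space, with closure $\mathrm{cl}$ and interior $\mathrm{int}$. A set $A\subseteq X$ is semi-open if $A\subseteq\mathrm{cl}(\mathrm{int}(A))$; semi-closed if its complement is semi-open; $\mathrm{scl}(A)$ is the intersection of all semi-closed sets containing $A$. $A$ is $w$-closed if $\mathrm{cl}(A)\subseteq U$ whenever $A\subseteq U$ and $U$ is semi-open; $w$-open if its complement is $w$-closed. $A$ is $h$-closed if $\mathrm{scl}(A)\subseteq U$ whenever $A\subseteq U$ and $U$ is $w$-open; $h\text{-}\mathrm{cl}(A)$ is the intersection of all $h$-closed sets containing $A$. $A$ is an $\alpha^*$-set if $\mathrm{int}(\mathrm{cl}(\mathrm{int}(A)))=\mathrm{int}(A)$, and a $C$-set if $A=U\cap V$ with $U$ open and $V$ an $\alpha^*$-set. $A$ is $hCg$-closed if $h\text{-}\mathrm{cl}(A)\subseteq U$ whenever $A\subseteq U$ and $U$ is a $C$-set; $hCg$-open if its complement is $hCg$-closed. $A$ is $H^*$-closed if $h\text{-}\mathrm{cl}(A)\subseteq U$ whenever $A\subseteq U$ and $U$ is $hCg$-open; $H^*$-open if its complement is $H^*$-closed; $H^*\text{-}\mathrm{cl}(A)$ is the intersection of all $H^*$-closed sets containing $A$. $A$ is $gH^*$-closed if $H^*\text{-}\mathrm{cl}(A)\subseteq U$ whenever $A\subseteq U$ and $U$ is $H^*$-open. $X$ is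 $H^*$-$T_{1/2}$ if every $gH^*$-closed subset of $X$ is $H^*$-closed. *)

theory Defs
  imports "HOL-Analysis.Analysis"
begin

definition semi_open :: "'a topology \<Rightarrow> 'a set \<Rightarrow> bool" where
  "semi_open T A \<longleftrightarrow> A \<subseteq> topspace T \<and> A \<subseteq> T closure_of (T interior_of A)"

definition semi_closed :: "'a topology \<Rightarrow> 'a set \<Rightarrow> bool" where
  "semi_closed T A \<longleftrightarrow> A \<subseteq> topspace T \<and> semi_open T (topspace T - A)"

definition scl :: "'a topology \<Rightarrow> 'a set \<Rightarrow> 'a set" where
  "scl T A = \<Inter> {F. semi_closed T F \<and> A \<subseteq> F}"

definition w_closed :: "'a topology \<Rightarrow> 'a set \<Rightarrow> bool" where
  "w_closed T A \<longleftrightarrow> A \<subseteq> topspace T \<and>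
     (\<forall>U. semi_open T U \<and> A \<subseteq> U \<longrightarrow> T closure_of A \<subseteq> U)"

definition w_open :: "'a topology \<Rightarrow> 'a set \<Rightarrow> bool" where
  "w_open T A \<longleftrightarrow> A \<subseteq> topspace T \<and> w_closed T (topspace T - A)"

definition h_closed :: "'a topology \<Rightarrow> 'a set \<Rightarrow> bool" where
  "h_closed T A \<longleftrightarrow> A \<subseteq> topspace T \<and>
     (\<forall>U. w_open T U \<and> A \<subseteq> U \<longrightarrow> scl T A \<subseteq> U)"

definition h_cl :: "'a topology \<Rightarrow> 'a set \<Rightarrow> 'a set" where
  "h_cl T A = \<Inter> {F. h_closed T F \<and> A \<subseteq> F}"

definition alpha_star_set :: "'a topology \<Rightarrow> 'a set \<Rightarrow> bool" where
  "alpha_star_set T A \<longleftrightarrow> A \<subseteq> topspace T \<and>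
     T interior_of (T closure_of (T interior_of A)) = T interior_of A"

definition C_set :: "'a topology \<Rightarrow> 'a set \<Rightarrow> bool" where
  "C_set T A \<longleftrightarrow> (\<exists>U V. openin T U \<and> alpha_star_set T V \<and> A = U \<inter> V)"

definition hCg_closed :: "'a topology \<Rightarrow> 'a set \<Rightarrow> bool" where
  "hCg_closed T A \<longleftrightarrow> A \<subseteq> topspace T \<and>
     (\<forall>U. C_set T U \<and> A \<subseteq> U \<longrightarrow> h_cl T A \<subseteq> U)"

definition hCg_open :: "'a topology \<Rightarrow> 'a set \<Rightarrow> bool" where
  "hCg_open T A \<longleftrightarrow> A \<subseteq> topspace T \<and> hCg_closed T (topspace T - A)"

definition Hstar_closed :: "'a topology \<Rightarrow> 'a set \<Rightarrow> bool" where
  "Hstar_closed T A \<longleftrightarrow> A \<subseteq> topspace T \<and>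
     (\<forall>U. hCg_open T U \<and> A \<subseteq> U \<longrightarrow> h_cl T A \<subseteq> U)"

definition Hstar_open :: "'a topology \<Rightarrow> 'a set \<Rightarrow> bool" where
  "Hstar_open T A \<longleftrightarrow> A \<subseteq> topspace T \<and> Hstar_closed T (topspace T - A)"

definition Hstar_cl :: "'a topology \<Rightarrow> 'a set \<Rightarrow> 'a set" where
  "Hstar_cl T A = \<Inter> {F. Hstar_closed T F \<and> A \<subseteq> F}"

definition gHstar_closed :: "'a topology \<Rightarrow> 'a set \<Rightarrow> bool" where
  "gHstar_closed T A \<longleftrightarrow> A \<subseteq> topspace T \<and>
     (\<forall>U. Hstar_open T U \<and> A \<subseteq> U \<longrightarrow> Hstar_cl T A \<subseteq> U)"

definition Hstar_T_half :: "'a topology \<Rightarrow> bool" where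
  "Hstar_T_half T \<longleftrightarrow> (\<forall>A. gHstar_closed T A \<longrightarrow> Hstar_closed T A)"

end

theory Submission
  imports Defs
begin

lemma open_semi_open: "openin T U \<Longrightarrow> semi_open T U"
  unfolding semi_open_def
  by (simp add: interior_of_openin closure_of_subset openin_subset)

lemma closed_semi_closed: "closedin T C \<Longrightarrow> semi_closed T C"
  unfolding semi_closed_def closedin_def by (simp add: open_semi_open)

lemma semi_closed_top: "semi_closed T (topspace T)"
  by (simp add: closed_semi_closed)

lemma scl_sub: "semi_closed T S \<Longrightarrow> scl T S \<subseteq> S"
  unfolding scl_def by (rule Inter_lower) simp

lemma semi_closed_h_closed: "semi_closed T S \<Longrightarrow> h_closed T S"
proof -
  assume a: "semi_closed T S"
  have "S \<subseteq> topspace T" using a unfolding semi_closed_def by simp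
  moreover have "scl T S \<subseteq> S" using a by (rule scl_sub)
  ultimately show ?thesis unfolding h_closed_def by auto
qed

lemma hcl_sub: "h_closed T H \<Longrightarrow> A \<subseteq> H \<Longrightarrow> h_cl T A \<subseteq> H"
  unfolding h_cl_def by (rule Inter_lower) simp

lemma hcl_mono: "A \<subseteq> B \<Longrightarrow> h_cl T A \<subseteq> h_cl T B"
  unfolding h_cl_def by (intro Inter_anti_mono) auto

lemma hcl_top: "A \<subseteq> topspace T \<Longrightarrow> h_cl T A \<subseteq> topspace T"
  by (simp add: hcl_sub semi_closed_h_closed semi_closed_top)

lemma hcl_cl: "A \<subseteq> topspace T \<Longrightarrow> h_cl T A \<subseteq> T closure_of A"
  by (simp add: closed_semi_closed closure_of_subset hcl_sub semi_closed_h_closed)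

lemma hCg_of_h: "h_closed T S \<Longrightarrow> hCg_closed T S"
proof -
  assume a: "h_closed T S"
  have "S \<subseteq> topspace T" using a unfolding h_closed_def by simp
  moreover have "h_cl T S \<subseteq> S" using a by (rule hcl_sub) simp
  ultimately show ?thesis unfolding hCg_closed_def by auto
qed

lemma Hstar_top: "Hstar_closed T (topspace T)"
  unfolding Hstar_closed_def using hcl_top[of "topspace T" T] by auto

lemma Hcl_sub: "Hstar_closed T F \<Longrightarrow> A \<subseteq> F \<Longrightarrow> Hstar_cl T A \<subseteq> F"
  unfolding Hstar_cl_def by (rule Inter_lower) simp

lemma alpha_top: "alpha_star_set T (topspace T)"
  unfolding alpha_star_set_def by (simp add: interior_of_openin)

lemma alpha_compl_pt:
  assumes y: "y \<in> topspace T" and W: "openin T W" "y \<in> W" "W \<subseteq> T closure_of {y}"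
  shows "alpha_star_set T (topspace T - {y})"
proof -
  let ?S = "topspace T - {y}"
  let ?I = "T interior_of ?S"
  have 1: "?I \<subseteq> T interior_of (T closure_of ?I)"
    by (meson closure_of_subset interior_of_maximal interior_of_subset_topspace openin_interior_of)
  have 2: "T interior_of (T closure_of ?I) \<subseteq> ?I"
  proof
    fix z assume "z \<in> T interior_of (T closure_of ?I)"
    then obtain N where N: "openin T N" "z \<in> N" "N \<subseteq> T closure_of ?I"
      unfolding interior_of_def by blast
    have "y \<notin> N"
    proof
      assume yN: "y \<in> N"
      then have yc: "y \<in> T closure_of ?I" using N(3) by (rule subsetD[rotated])
      have NW: "openin T (N \<inter> W)" "y \<in> N \<inter> W" using N W yN by auto
      have "\<forall>U. y \<in> U \<and> openin T U \<longrightarrow> (\<exists>z. z \<in> ?I \<and> z \<in> U)"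
        using yc by (simp add: in_closure_of)
      then obtain z' where z': "z' \<in> ?I" "z' \<in> N \<inter> W"
        using NW by meson
      then have "z' \<in> W" by simp
      then have "z' \<in> T closure_of {y}" using W(3) by (rule subsetD[rotated])
      then have "\<forall>U. z' \<in> U \<and> openin T U \<longrightarrow> (\<exists>y'. y' \<in> {y} \<and> y' \<in> U)"
        by (simp add: in_closure_of)
      then have "y \<in> ?I" using z'(1) by (metis openin_interior_of singletonD)
      then show False using interior_of_subset[of T ?S] by blast
    qed
    then have "N \<subseteq> ?S" using N openin_subset by blast
    then show "z \<in> ?I" using N interior_of_maximal by blast
  qed
  show ?thesis unfolding alpha_star_set_def using 1 2 by blast
qed

lemma hcg_pt:
  assumes B: "hCg_closed T B" and y: "y \<in> topspace T" "y \<notin> B"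
  shows "y \<notin> h_cl T B"
proof -
  let ?X = "topspace T"
  have BX: "B \<subseteq> ?X" and Bc: "\<And>U. C_set T U \<Longrightarrow> B \<subseteq> U \<Longrightarrow> h_cl T B \<subseteq> U"
    using B unfolding hCg_closed_def by auto
  have BS: "B \<subseteq> ?X - {y}" using BX y by auto
  have "h_cl T B \<subseteq> ?X - {y}"
  proof (cases "\<exists>W. openin T W \<and> y \<in> W \<and> W \<subseteq> T closure_of {y}")
    case True
    then obtain W where "openin T W" "y \<in> W" "W \<subseteq> T closure_of {y}" by blast
    then have "alpha_star_set T (?X - {y})" using alpha_compl_pt y by metis
    then have "C_set T (?X - {y})" unfolding C_set_def
      by (rule_tac x="?X" in exI, rule_tac x="?X - {y}" in exI) auto
    then show ?thesis using Bc BS by blast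
  next
    case noW: False
    show ?thesis
    proof (cases "closedin T {y}")
      case True
      then have "openin T (?X - {y})" unfolding closedin_def by simp
      then have "C_set T (?X - {y})" unfolding C_set_def using alpha_top
        by (rule_tac x="?X - {y}" in exI, rule_tac x="?X" in exI) auto
      then show ?thesis using Bc BS by blast
    next
      case ncl: False
      have "h_closed T (?X - {y})"
        unfolding h_closed_def
      proof (intro conjI allI impI)
        show "?X - {y} \<subseteq> ?X" by blast
        fix U assume U: "w_open T U \<and> ?X - {y} \<subseteq> U"
        then have UX: "U \<subseteq> ?X" unfolding w_open_def by simp
        show "scl T (?X - {y}) \<subseteq> U"
        proof (cases "y \<in> U")
          case True
          then have "U = ?X" using U UX by blast
          moreover have "scl T (?X - {y}) \<subseteq> ?X"
            unfolding scl_def using semi_closed_top by (intro Inter_lower) auto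
          ultimately show ?thesis by simp
        next
          case False
          then have "U = ?X - {y}" using U UX by blast
          moreover have "?X - (?X - {y}) = {y}" using y by blast
          ultimately have wc: "w_closed T {y}" using U unfolding w_open_def by simp
          let ?O = "?X - T closure_of {y}"
          let ?V = "{y} \<union> ?O"
          have Oo: "openin T ?O" by (simp add: openin_diff)
          have yO: "y \<in> T closure_of ?O"
            unfolding in_closure_of
          proof (intro conjI allI impI)
            show "y \<in> ?X" using y by simp
            fix N assume N: "y \<in> N \<and> openin T N"
            show "\<exists>z. z \<in> ?O \<and> z \<in> N"
            proof (rule ccontr)
              assume "\<not> (\<exists>z. z \<in> ?O \<and> z \<in> N)"
              then have "N \<subseteq> T closure_of {y}" using N openin_subset[of T N] by blast
              then show False using noW N by blast
            qed
          qed
          have "?O \<subseteq> T interior_of ?V" using Oo by (intro interior_of_maximal) auto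
          then have "T closure_of ?O \<subseteq> T closure_of (T interior_of ?V)" by (rule closure_of_mono)
          moreover have "?O \<subseteq> T closure_of ?O" by (simp add: closure_of_subset)
          ultimately have "?V \<subseteq> T closure_of (T interior_of ?V)" using yO by blast
          then have "semi_open T ?V" unfolding semi_open_def using y by blast
          then have "T closure_of {y} \<subseteq> ?V" using wc unfolding w_closed_def by blast
          moreover have "\<not> T closure_of {y} \<subseteq> {y}"
            using ncl closure_of_subset_eq[of "{y}" T] y by blast
          ultimately show ?thesis by blast
        qed
      qed
      then show ?thesis using BS hcl_sub by blast
    qed
  qed
  then show ?thesis by blast
qed


lemma key_open:
  assumes "w_closed T {x}" "openin T W" "x \<in> W"
  shows "T closure_of {x} \<subseteq> W"
  using assms open_semi_open[of T W] unfolding w_closed_def by blast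

lemma semi_open_pt:
  assumes o: "openin T (T closure_of {x})" and y: "y \<in> T closure_of {x}"
    and V: "semi_open T V" "y \<in> V"
  shows "x \<in> V"
proof -
  have "y \<in> T closure_of (T interior_of V)" using V unfolding semi_open_def by blast
  then have "\<forall>U. y \<in> U \<and> openin T U \<longrightarrow> (\<exists>z. z \<in> T interior_of V \<and> z \<in> U)"
    by (simp add: in_closure_of)
  then obtain z where z: "z \<in> T interior_of V" "z \<in> T closure_of {x}" using o y by meson
  from z(2) have "\<forall>U. z \<in> U \<and> openin T U \<longrightarrow> (\<exists>y'. y' \<in> {x} \<and> y' \<in> U)"
    by (simp add: in_closure_of)
  then have "x \<in> T interior_of V" using z(1) by (metis openin_interior_of singletonD)
  then show ?thesis using interior_of_subset[of T V] by blast
qed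

lemma K3:
  assumes wc: "w_closed T {x}" and o: "openin T (T closure_of {x})"
    and H: "h_closed T H" "x \<in> H"
  shows "T closure_of {x} \<subseteq> H"
proof
  let ?X = "topspace T"
  fix y assume y: "y \<in> T closure_of {x}"
  show "y \<in> H"
  proof (rule ccontr)
    assume yH: "y \<notin> H"
    have yX: "y \<in> ?X" using y closure_of_subset_topspace[of T "{x}"] by blast
    have cly: "T closure_of {y} \<subseteq> T closure_of {x}"
      using y by (intro closure_of_minimal) auto
    have "w_closed T {y}"
      unfolding w_closed_def
    proof (intro conjI allI impI)
      show "{y} \<subseteq> ?X" using yX by simp
      fix V assume V: "semi_open T V \<and> {y} \<subseteq> V"
      then have "x \<in> V" using semi_open_pt[OF o y] by blast
      then have "T closure_of {x} \<subseteq> V" using wc V unfolding w_closed_def by blast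
      then show "T closure_of {y} \<subseteq> V" using cly by blast
    qed
    moreover have "?X - (?X - {y}) = {y}" using yX by blast
    ultimately have wo: "w_open T (?X - {y})" unfolding w_open_def by simp
    have HX: "H \<subseteq> ?X" using H unfolding h_closed_def by blast
    then have "H \<subseteq> ?X - {y}" using yH by blast
    then have s: "scl T H \<subseteq> ?X - {y}" using H wo unfolding h_closed_def by blast
    have "y \<in> scl T H"
      unfolding scl_def
    proof (rule InterI)
      fix S assume "S \<in> {F. semi_closed T F \<and> H \<subseteq> F}"
      then have S: "semi_closed T S" "H \<subseteq> S" by auto
      show "y \<in> S"
      proof (rule ccontr)
        assume "y \<notin> S"
        then have "y \<in> ?X - S" using yX by blast
        moreover have "semi_open T (?X - S)" using S unfolding semi_closed_def by blast
        ultimately have "x \<in> ?X - S" using semi_open_pt[OF o y] by blast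
        then show False using S H by blast
      qed
    qed
    then show False using s by blast
  qed
qed

lemma inter_Hstar:
  assumes ne: "\<F> \<noteq> {}" and all: "\<forall>F\<in>\<F>. Hstar_closed T F"
  shows "Hstar_closed T (\<Inter>\<F>)"
proof -
  let ?X = "topspace T"
  let ?F0 = "\<Inter>\<F>"
  obtain F1 where "F1 \<in> \<F>" using ne by blast
  then have "F1 \<subseteq> ?X" using all unfolding Hstar_closed_def by blast
  then have F0X: "?F0 \<subseteq> ?X" using \<open>F1 \<in> \<F>\<close> by blast
  show ?thesis
    unfolding Hstar_closed_def
  proof (intro conjI allI impI)
    show "?F0 \<subseteq> ?X" by (rule F0X)
    fix U assume U: "hCg_open T U \<and> ?F0 \<subseteq> U"
    show "h_cl T ?F0 \<subseteq> U"
    proof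
      fix x assume xin: "x \<in> h_cl T ?F0"
      show "x \<in> U"
      proof (rule ccontr)
        assume xU: "x \<notin> U"
        have xX: "x \<in> ?X" using xin hcl_top[OF F0X] by blast
        have "x \<notin> ?F0" using xU U by blast
        then obtain Fj where Fj: "Fj \<in> \<F>" "x \<notin> Fj" by blast
        have FjH: "Hstar_closed T Fj" using all Fj by blast
        have FjX: "Fj \<subseteq> ?X" using FjH unfolding Hstar_closed_def by blast
        have xj: "x \<in> h_cl T Fj" using xin hcl_mono[of ?F0 Fj T] Fj by blast
        have nh: "\<not> h_closed T (?X - {x})"
        proof
          assume "h_closed T (?X - {x})"
          then have "h_cl T Fj \<subseteq> ?X - {x}" using FjX Fj by (intro hcl_sub) auto
          then show False using xj by blast
        qed
        have xx: "?X - (?X - {x}) = {x}" using xX by blast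
        have wc: "w_closed T {x}"
        proof -
          obtain U' where U': "w_open T U'" "?X - {x} \<subseteq> U'" "\<not> scl T (?X - {x}) \<subseteq> U'"
            using nh unfolding h_closed_def by blast
          have U'X: "U' \<subseteq> ?X" using U' unfolding w_open_def by blast
          have "scl T (?X - {x}) \<subseteq> ?X"
            unfolding scl_def using semi_closed_top by (intro Inter_lower) auto
          then have "x \<notin> U'" using U' U'X by blast
          then have "U' = ?X - {x}" using U' U'X by blast
          then show ?thesis using U' xx unfolding w_open_def by simp
        qed
        show False
        proof (cases "\<exists>W. openin T W \<and> x \<in> W \<and> W \<subseteq> T closure_of {x}")
          case True
          then obtain W where W: "openin T W" "x \<in> W" "W \<subseteq> T closure_of {x}" by blast
          have "T closure_of {x} \<subseteq> W" using key_open[OF wc W(1,2)] .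
          then have clW: "T closure_of {x} = W" using W by blast
          then have o: "openin T (T closure_of {x})" using W by simp
          let ?B = "?X - U"
          have Bh: "hCg_closed T ?B" using U unfolding hCg_open_def by blast
          have xB: "x \<in> ?B" using xX xU by blast
          have clB: "T closure_of {x} \<subseteq> ?B"
          proof
            fix y assume y: "y \<in> T closure_of {x}"
            show "y \<in> ?B"
            proof (rule ccontr)
              assume yB: "y \<notin> ?B"
              have yX: "y \<in> ?X" using y closure_of_subset_topspace[of T "{x}"] by blast
              have "y \<notin> h_cl T ?B" using hcg_pt[OF Bh yX yB] .
              then obtain H where H: "h_closed T H" "?B \<subseteq> H" "y \<notin> H"
                unfolding h_cl_def by blast
              have "T closure_of {x} \<subseteq> H" using K3[OF wc o H(1)] H xB by blast
              then show False using y H by blast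
            qed
          qed
          have "x \<in> T closure_of ?F0" using xin hcl_cl[OF F0X] by blast
          then have "\<forall>V. x \<in> V \<and> openin T V \<longrightarrow> (\<exists>z. z \<in> ?F0 \<and> z \<in> V)"
            by (simp add: in_closure_of)
          then obtain z where "z \<in> ?F0" "z \<in> W" using W by meson
          then show False using clW clB U by blast
        next
          case noW: False
          have "semi_open T (?X - {x})"
            unfolding semi_open_def
          proof (intro conjI)
            show "?X - {x} \<subseteq> ?X" by blast
            show "?X - {x} \<subseteq> T closure_of (T interior_of (?X - {x}))"
            proof
              fix y assume y: "y \<in> ?X - {x}"
              show "y \<in> T closure_of (T interior_of (?X - {x}))"
                unfolding in_closure_of
              proof (intro conjI allI impI)
                show "y \<in> ?X" using y by blast
                fix N assume N: "y \<in> N \<and> openin T N"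
                show "\<exists>z. z \<in> T interior_of (?X - {x}) \<and> z \<in> N"
                proof (rule ccontr)
                  assume nz: "\<not> (\<exists>z. z \<in> T interior_of (?X - {x}) \<and> z \<in> N)"
                  have NX: "N \<subseteq> ?X" using N openin_subset by blast
                  have Ncl: "N \<subseteq> T closure_of {x}"
                  proof
                    fix n assume n: "n \<in> N"
                    show "n \<in> T closure_of {x}"
                      unfolding in_closure_of
                    proof (intro conjI allI impI)
                      show "n \<in> ?X" using n NX by blast
                      fix M assume M: "n \<in> M \<and> openin T M"
                      show "\<exists>y'. y' \<in> {x} \<and> y' \<in> M"
                      proof (rule ccontr)
                        assume "\<not> (\<exists>y'. y' \<in> {x} \<and> y' \<in> M)"
                        then have xM: "x \<notin> M" by blast
                        have "openin T (M \<inter> N)" using M N by auto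
                        moreover have "M \<inter> N \<subseteq> ?X - {x}" using xM NX by blast
                        ultimately have "M \<inter> N \<subseteq> T interior_of (?X - {x})"
                          by (intro interior_of_maximal)
                        then show False using nz n M by blast
                      qed
                    qed
                  qed
                  then have "y \<in> T closure_of {x}" using N by blast
                  then have "\<forall>U. y \<in> U \<and> openin T U \<longrightarrow> (\<exists>y'. y' \<in> {x} \<and> y' \<in> U)"
                    by (simp add: in_closure_of)
                  then have "x \<in> N" using N by blast
                  then show False using noW N Ncl by blast
                qed
              qed
            qed
          qed
          then have "semi_closed T {x}" unfolding semi_closed_def using xX by simp
          then have "hCg_closed T {x}" by (intro hCg_of_h semi_closed_h_closed)
          then have "hCg_open T (?X - {x})" unfolding hCg_open_def using xx by simp
          moreover have "Fj \<subseteq> ?X - {x}" using FjX Fj by blast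
          ultimately have "h_cl T Fj \<subseteq> ?X - {x}" using FjH unfolding Hstar_closed_def by blast
          then show False using xj by blast
        qed
      qed
    qed
  qed
qed

theorem theorem5p2:
  fixes T :: "'a topology"
  shows "Hstar_T_half T \<longleftrightarrow>
         (\<forall>x \<in> topspace T. Hstar_open T {x} \<or> Hstar_closed T {x})"
proof
  let ?X = "topspace T"
  assume half: "Hstar_T_half T"
  show "\<forall>x \<in> ?X. Hstar_open T {x} \<or> Hstar_closed T {x}"
  proof
    fix x assume xX: "x \<in> ?X"
    have xx: "?X - (?X - {x}) = {x}" using xX by blast
    show "Hstar_open T {x} \<or> Hstar_closed T {x}"
    proof (cases "Hstar_closed T {x}")
      case True then show ?thesis by simp
    next
      case False
      have "gHstar_closed T (?X - {x})"
        unfolding gHstar_closed_def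
      proof (intro conjI allI impI)
        show "?X - {x} \<subseteq> ?X" by blast
        fix U assume U: "Hstar_open T U \<and> ?X - {x} \<subseteq> U"
        have UX: "U \<subseteq> ?X" using U unfolding Hstar_open_def by blast
        show "Hstar_cl T (?X - {x}) \<subseteq> U"
        proof (cases "x \<in> U")
          case True
          then have "U = ?X" using U UX by blast
          then show ?thesis using Hcl_sub[OF Hstar_top, of "?X - {x}" T] by blast
        next
          case xU: False
          then have "U = ?X - {x}" using U UX by blast
          then have "Hstar_closed T {x}" using U xx unfolding Hstar_open_def by simp
          then show ?thesis using False by blast
        qed
      qed
      then have "Hstar_closed T (?X - {x})" using half unfolding Hstar_T_half_def by blast
      then have "Hstar_open T {x}" unfolding Hstar_open_def using xX by simp
      then show ?thesis by simp
    qed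
  qed
next
  let ?X = "topspace T"
  assume pts: "\<forall>x \<in> ?X. Hstar_open T {x} \<or> Hstar_closed T {x}"
  show "Hstar_T_half T"
    unfolding Hstar_T_half_def
  proof (intro allI impI)
    fix A assume gA: "gHstar_closed T A"
    have AX: "A \<subseteq> ?X" using gA unfolding gHstar_closed_def by blast
    have sub: "Hstar_cl T A \<subseteq> A"
    proof
      fix x assume x: "x \<in> Hstar_cl T A"
      show "x \<in> A"
      proof (rule ccontr)
        assume xA: "x \<notin> A"
        have xX: "x \<in> ?X" using x Hcl_sub[OF Hstar_top AX] by blast
        have xx: "?X - (?X - {x}) = {x}" using xX by blast
        have AS: "A \<subseteq> ?X - {x}" using AX xA by blast
        from pts xX have "Hstar_open T {x} \<or> Hstar_closed T {x}" by blast
        then have "Hstar_cl T A \<subseteq> ?X - {x}"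
        proof
          assume "Hstar_open T {x}"
          then have "Hstar_closed T (?X - {x})" unfolding Hstar_open_def by blast
          then show ?thesis using AS by (rule Hcl_sub)
        next
          assume "Hstar_closed T {x}"
          then have "Hstar_open T (?X - {x})" unfolding Hstar_open_def using xx by simp
          then show ?thesis using gA AS unfolding gHstar_closed_def by blast
        qed
        then show False using x by blast
      qed
    qed
    have "A \<subseteq> Hstar_cl T A" unfolding Hstar_cl_def by blast
    then have eq: "A = Hstar_cl T A" using sub by blast
    have "Hstar_closed T (\<Inter>{F. Hstar_closed T F \<and> A \<subseteq> F})"
      using Hstar_top[of T] AX by (intro inter_Hstar) auto
    then show "Hstar_closed T A" using eq unfolding Hstar_cl_def by simp
  qed
qed

end
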